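(* Consider the setting: $x_l=\theta+\sigma\eta_l$ with $\theta\in(0,\theta_R]$, $\sigma>0$, $\eta_l$ i.i.d. symmetric about zero with real characteristic function $\varphi_\eta$; power $P>0$, channel noise variance $\sigma_\nu^2\ge 0$, and design parameter $\omega\in(0,2\pi/\theta_R]$. Define $\mathrm{AsV}_{\hat\theta}(\omega)=\dfrac{P+\sigma_\nu^2-P\varphi_\eta(2\sigma\omega)}{2P\omega^2\varphi_\eta^2(\sigma\omega)}$, $\mathrm{AsV}_{\hat\sigma}(\omega)=\dfrac{P+\sigma_\nu^2-2P\varphi_\eta^2(\sigma\omega)+P\varphi_\eta(2\sigma\omega)}{2P\left[\frac{\partial\varphi_\eta(\sigma\omega)}{\partial\sigma}\right]^2}$, and, with $\gamma=\theta^2/\sigma^2$, $\mathrm{AsV}_{\hat\gamma}(\omega)=\dfrac{4\gamma}{\sigma^2}\left[\mathrm{AsV}_{\hat\theta}(\omega)+\gamma\,\mathrm{AsV}_{\hat\sigma}(\omega)\right]$. Let $\omega_\theta^*,\omega_\sigma^*,\omega_\gamma^*$ denote the minimizers over $\omega\in(0,2\pi/\theta_R]$ (understood as the limiting endpoint $0$ when the infimum is approached as $\omega\to0$) of $\mathrm{AsV}_{\hat\theta}$, $\mathrm{AsV}_{\hat\sigma}$, $\mathrm{AsV}_{\hat\gamma}$ respectively. If $\mathrm{AsV}_{\hat\theta}$ and $\mathrm{AsV}_{\hat\sigma}$ are differentiable quasi-convex functions of $\omega$ on $(0,2\pi/\theta_R]$, then $\omega_\gamma^*$ lies between $\omega_\theta^*$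 and $\omega_\sigma^*$.
   Context: A univariate function $f$ on $(0,2\pi/\theta_R]$ is called quasi-convex if either (c1) $f$ is monotone (non-decreasing or non-increasing), or (c2) $f$ has a global minimum at some $\omega^*$ such that $f$ is non-increasing for $\omega\le\omega^*$ and non-decreasing for $\omega\ge\omega^*$. *)

theory Defs
  imports "HOL-Probability.Probability"
begin

definition quasi_convex_on :: "real \<Rightarrow> (real \<Rightarrow> real) \<Rightarrow> bool" where
  "quasi_convex_on W f \<longleftrightarrow>
     (\<forall>x\<in>{0<..W}. \<forall>y\<in>{0<..W}. x \<le> y \<longrightarrow> f x \<le> f y) \<or>
     (\<forall>x\<in>{0<..W}. \<forall>y\<in>{0<..W}. x \<le> y \<longrightarrow> f y \<le> f x) \<or>
     (\<exists>w0\<in>{0<..W}. (\<forall>x\<in>{0<..W}. f w0 \<le> f x) \<and>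
        (\<forall>x\<in>{0<..W}. \<forall>y\<in>{0<..W}. x \<le> y \<longrightarrow> y \<le> w0 \<longrightarrow> f y \<le> f x) \<and>
        (\<forall>x\<in>{0<..W}. \<forall>y\<in>{0<..W}. w0 \<le> x \<longrightarrow> x \<le> y \<longrightarrow> f x \<le> f y))"

definition is_minimizer :: "real \<Rightarrow> (real \<Rightarrow> real) \<Rightarrow> real \<Rightarrow> bool" where
  "is_minimizer W f w \<longleftrightarrow>
     (w \<in> {0<..W} \<and> (\<forall>x\<in>{0<..W}. f w \<le> f x)) \<or>
     (w = 0 \<and> (f \<longlongrightarrow> Inf (f ` {0<..W})) (at_right 0))"

definition phi :: "real measure \<Rightarrow> real \<Rightarrow> real" where
  "phi M t = Re (char M t)"

definition AsV_theta :: "real measure \<Rightarrow> real \<Rightarrow> real \<Rightarrow> real \<Rightarrow> real \<Rightarrow> real" where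
  "AsV_theta M P s2nu sg \<omega> =
     (P + s2nu - P * phi M (2 * sg * \<omega>)) / (2 * P * \<omega>^2 * (phi M (sg * \<omega>))^2)"

definition AsV_sigma :: "real measure \<Rightarrow> real \<Rightarrow> real \<Rightarrow> real \<Rightarrow> real \<Rightarrow> real" where
  "AsV_sigma M P s2nu sg \<omega> =
     (P + s2nu - 2 * P * (phi M (sg * \<omega>))^2 + P * phi M (2 * sg * \<omega>)) /
     (2 * P * (deriv (\<lambda>s. phi M (s * \<omega>)) sg)^2)"

definition AsV_gamma :: "real measure \<Rightarrow> real \<Rightarrow> real \<Rightarrow> real \<Rightarrow> real \<Rightarrow> real \<Rightarrow> real" where
  "AsV_gamma M P s2nu theta sg \<omega> =
     (let \<gamma> = theta^2 / sg^2 in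
      4 * \<gamma> / sg^2 * (AsV_theta M P s2nu sg \<omega> + \<gamma> * AsV_sigma M P s2nu sg \<omega>))"

end

theory Submission imports Defs begin

lemma min_at_zero:
  fixes h :: "real \<Rightarrow> real"
  assumes W: "W > 0" and lim: "(h \<longlongrightarrow> H) (at_right 0)"
    and ge: "\<forall>x\<in>{0<..W}. H \<le> h x"
  shows "is_minimizer W h 0"
proof -
  have ne: "h ` {0<..W} \<noteq> {}" using W by auto
  have bdd: "bdd_below (h ` {0<..W})" using ge by (auto intro: bdd_belowI)
  have i1: "H \<le> Inf (h ` {0<..W})" using ne ge by (auto intro: cInf_greatest)
  have ev: "eventually (\<lambda>x. Inf (h ` {0<..W}) \<le> h x) (at_right 0)"
    unfolding eventually_at_right_field
    by (rule exI[of _ W]) (use W bdd in \<open>auto intro: cInf_lower\<close>)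
  have i2: "Inf (h ` {0<..W}) \<le> H"
    using tendsto_lowerbound[OF lim ev trivial_limit_at_right_real] .
  show ?thesis unfolding is_minimizer_def using lim i1 i2 by auto
qed

lemma block_min:
  fixes h :: "real \<Rightarrow> real"
  assumes c: "0 < c" "c \<le> d" "d \<le> W" and cont: "continuous_on {0<..W} h"
    and left: "\<forall>x\<in>{0<..W}. x < c \<longrightarrow> (\<exists>y\<in>{c..d}. h y \<le> h x)"
    and right: "\<forall>x\<in>{0<..W}. d < x \<longrightarrow> (\<exists>y\<in>{c..d}. h y \<le> h x)"
  shows "\<exists>w\<in>{c..d}. is_minimizer W h w"
proof -
  have "continuous_on {c..d} h" using cont by (rule continuous_on_subset) (use c in auto)
  then obtain w where w: "w \<in> {c..d}" "\<forall>y\<in>{c..d}. h w \<le> h y"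
    using continuous_attains_inf[of "{c..d}" h] c by auto
  have "\<forall>x\<in>{0<..W}. h w \<le> h x"
  proof
    fix x assume x: "x \<in> {0<..W}"
    show "h w \<le> h x"
    proof (cases "x < c")
      case True then obtain y where "y \<in> {c..d}" "h y \<le> h x" using left x by auto
      then show ?thesis using w(2) by (meson order.trans)
    next
      case False
      show ?thesis
      proof (cases "d < x")
        case True then obtain y where "y \<in> {c..d}" "h y \<le> h x" using right x by auto
        then show ?thesis using w(2) by (meson order.trans)
      next
        case False then show ?thesis using w \<open>\<not> x < c\<close> by auto
      qed
    qed
  qed
  then show ?thesis using w c unfolding is_minimizer_def by auto
qed

lemma lemA:
  fixes f g :: "real \<Rightarrow> real"
  assumes W: "W > 0" and ab: "a > 0" "b > 0"
    and cf: "continuous_on {0<..W} f" and cg: "continuous_on {0<..W} g"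
    and pq: "0 \<le> p" "p \<le> q" "q \<le> W"
    and fdec: "\<forall>x\<in>{0<..W}. \<forall>y\<in>{0<..W}. x \<le> y \<longrightarrow> y \<le> p \<longrightarrow> f y \<le> f x"
    and finc: "\<forall>x\<in>{0<..W}. \<forall>y\<in>{0<..W}. p \<le> x \<longrightarrow> x \<le> y \<longrightarrow> f x \<le> f y"
    and gdec: "\<forall>x\<in>{0<..W}. \<forall>y\<in>{0<..W}. x \<le> y \<longrightarrow> y \<le> q \<longrightarrow> g y \<le> g x"
    and ginc: "\<forall>x\<in>{0<..W}. \<forall>y\<in>{0<..W}. q \<le> x \<longrightarrow> x \<le> y \<longrightarrow> g x \<le> g y"
    and flim: "p = 0 \<Longrightarrow> (f \<longlongrightarrow> Lf) (at_right 0)"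
    and glim: "q = 0 \<Longrightarrow> (g \<longlongrightarrow> Lg) (at_right 0)"
  shows "\<exists>w. is_minimizer W (\<lambda>x. a * f x + b * g x) w \<and> p \<le> w \<and> w \<le> q"
proof -
  define h where "h = (\<lambda>x. a * f x + b * g x)"
  have ch: "continuous_on {0<..W} h" unfolding h_def
    by (intro continuous_intros cf cg)
  have hdec: "\<forall>x\<in>{0<..W}. \<forall>y\<in>{0<..W}. x \<le> y \<longrightarrow> y \<le> p \<longrightarrow> h y \<le> h x"
  proof (intro ballI impI)
    fix x y assume *: "x \<in> {0<..W}" "y \<in> {0<..W}" "x \<le> y" "y \<le> p"
    have "f y \<le> f x" "g y \<le> g x" using fdec gdec * pq by auto
    then show "h y \<le> h x" unfolding h_def using ab by (intro add_mono mult_left_mono) auto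
  qed
  have hinc: "\<forall>x\<in>{0<..W}. \<forall>y\<in>{0<..W}. q \<le> x \<longrightarrow> x \<le> y \<longrightarrow> h x \<le> h y"
  proof (intro ballI impI)
    fix x y assume *: "x \<in> {0<..W}" "y \<in> {0<..W}" "q \<le> x" "x \<le> y"
    have "f x \<le> f y" "g x \<le> g y" using finc ginc * pq by auto
    then show "h x \<le> h y" unfolding h_def using ab by (intro add_mono mult_left_mono) auto
  qed
  have right: "\<forall>x\<in>{0<..W}. q < x \<longrightarrow> (\<exists>y\<in>{c..q}. h y \<le> h x)" if "0 < c" "c \<le> q" for c
    using hinc that pq by (metis atLeastAtMost_iff greaterThanAtMost_iff less_eq_real_def less_le_trans order_refl)
  have fge: "Lf \<le> f x" if "p = 0" "x \<in> {0<..W}" for x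
  proof -
    have ev: "eventually (\<lambda>t. f t \<le> f x) (at_right 0)"
      unfolding eventually_at_right_field
      by (rule exI[of _ x]) (use that finc in auto)
    show ?thesis using tendsto_upperbound[OF flim[OF that(1)] ev trivial_limit_at_right_real] .
  qed
  show ?thesis
  proof (cases "p > 0")
    case True
    have left: "\<forall>x\<in>{0<..W}. x < p \<longrightarrow> (\<exists>y\<in>{p..q}. h y \<le> h x)"
    proof (intro ballI impI)
      fix x assume x: "x \<in> {0<..W}" "x < p"
      have "p \<in> {0<..W}" using True pq by auto
      then have "h p \<le> h x" using hdec x by auto
      then show "\<exists>y\<in>{p..q}. h y \<le> h x" using pq by force
    qed
    obtain w where "w \<in> {p..q}" "is_minimizer W h w"
      using block_min[OF True pq(2,3) ch left right[OF True pq(2)]] by auto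
    then show ?thesis unfolding h_def by auto
  next
    case False
    then have p0: "p = 0" using pq by auto
    show ?thesis
    proof (cases "q > 0")
      case qpos: True
      show ?thesis
      proof (cases "bdd_above (g ` {0<..q})")
        case bdd: True
        define G where "G = Sup (g ` {0<..q})"
        have neq: "g ` {0<..q} \<noteq> {}" using qpos by auto
        have glim': "(g \<longlongrightarrow> G) (at_right 0)"
        proof (rule order_tendstoI)
          fix a' assume "a' < G"
          then obtain y where y: "y \<in> {0<..q}" "a' < g y"
            using less_cSup_iff[OF neq bdd] G_def by auto
          show "eventually (\<lambda>x. a' < g x) (at_right 0)"
            unfolding eventually_at_right_field
            by (rule exI[of _ y]) (use y gdec pq in \<open>auto intro: less_le_trans\<close>)
        next
          fix a' assume "G < a'"
          show "eventually (\<lambda>x. g x < a') (at_right 0)"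
            unfolding eventually_at_right_field
          proof (rule exI[of _ q], intro conjI allI impI)
            fix y assume "0 < y" "y < q"
            then have "g y \<le> G" unfolding G_def using bdd by (auto intro: cSup_upper)
            then show "g y < a'" using \<open>G < a'\<close> by auto
          qed (use qpos in auto)
        qed
        define H where "H = a * Lf + b * G"
        have hlim: "(h \<longlongrightarrow> H) (at_right 0)" unfolding h_def H_def
          by (intro tendsto_intros flim[OF p0] glim')
        show ?thesis
        proof (cases "\<forall>x\<in>{0<..W}. H \<le> h x")
          case True
          then show ?thesis using min_at_zero[OF W hlim True] p0 pq unfolding h_def by auto
        next
          case False
          then obtain x0 where x0: "x0 \<in> {0<..W}" "h x0 < H" by (auto simp: not_le)
          obtain x1 where x1: "x1 \<in> {0<..q}" "h x1 < H"
          proof (cases "x0 \<le> q")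
            case True then show ?thesis using that x0 by auto
          next
            case False
            then have "h q \<le> h x0" using hinc x0 qpos pq by auto
            then show ?thesis using that[of q] x0 qpos by auto
          qed
          have "eventually (\<lambda>x. h x1 < h x) (at_right 0)"
            using order_tendstoD(1)[OF hlim x1(2)] .
          then obtain d where d: "d > 0" "\<forall>y>0. y < d \<longrightarrow> h x1 < h y"
            unfolding eventually_at_right_field by auto
          define c where "c = min d x1"
          have c: "0 < c" "c \<le> q" using d x1 by (auto simp: c_def)
          have left: "\<forall>x\<in>{0<..W}. x < c \<longrightarrow> (\<exists>y\<in>{c..q}. h y \<le> h x)"
          proof (intro ballI impI)
            fix x assume "x \<in> {0<..W}" "x < c"
            then have "h x1 < h x" using d by (auto simp: c_def)
            moreover have "x1 \<in> {c..q}" using x1 by (auto simp: c_def)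
            ultimately show "\<exists>y\<in>{c..q}. h y \<le> h x" using less_imp_le by blast
          qed
          obtain w where "w \<in> {c..q}" "is_minimizer W h w"
            using block_min[OF c(1) c(2) pq(3) ch left right[OF c]] by auto
          then show ?thesis unfolding h_def using p0 c by auto
        qed
      next
        case nbdd: False
        then obtain y1 where y1: "y1 \<in> {0<..q}" "(h q - a * Lf) / b < g y1"
          unfolding bdd_above_def by (auto simp: not_le) (meson greaterThanAtMost_iff)
        have c: "0 < y1" "y1 \<le> q" using y1 by auto
        have left: "\<forall>x\<in>{0<..W}. x < y1 \<longrightarrow> (\<exists>y\<in>{y1..q}. h y \<le> h x)"
        proof (intro ballI impI)
          fix x assume x: "x \<in> {0<..W}" "x < y1"
          have "g y1 \<le> g x" using gdec x y1 pq by auto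
          moreover have "Lf \<le> f x" using fge[OF p0 x(1)] .
          moreover have "h q - a * Lf < b * g y1" using y1(2) ab by (simp add: field_simps)
          ultimately have "h q < h x" unfolding h_def using ab
            by (smt (verit) mult_left_mono)
          then show "\<exists>y\<in>{y1..q}. h y \<le> h x" using c
            by (intro bexI[of _ q]) auto
        qed
        obtain w where "w \<in> {y1..q}" "is_minimizer W h w"
          using block_min[OF c(1) c(2) pq(3) ch left right[OF c]] by auto
        then show ?thesis unfolding h_def using p0 c by auto
      qed
    next
      case False
      then have q0: "q = 0" using pq by auto
      define H where "H = a * Lf + b * Lg"
      have hlim: "(h \<longlongrightarrow> H) (at_right 0)" unfolding h_def H_def
        by (intro tendsto_intros flim[OF p0] glim[OF q0])
      have gge: "Lg \<le> g x" if "x \<in> {0<..W}" for x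
      proof -
        have ev: "eventually (\<lambda>t. g t \<le> g x) (at_right 0)"
          unfolding eventually_at_right_field
          by (rule exI[of _ x]) (use that ginc q0 in auto)
        show ?thesis using tendsto_upperbound[OF glim[OF q0] ev trivial_limit_at_right_real] .
      qed
      have "\<forall>x\<in>{0<..W}. H \<le> h x"
        unfolding H_def h_def using fge[OF p0] gge ab
        by (auto intro!: add_mono mult_left_mono)
      then show ?thesis using min_at_zero[OF W hlim] p0 q0 unfolding h_def by auto
    qed
  qed
qed

lemma lemB:
  fixes f :: "real \<Rightarrow> real"
  assumes W: "W > 0" and qc: "quasi_convex_on W f" and mn: "is_minimizer W f w"
  shows "0 \<le> w" "w \<le> W"
    "\<forall>x\<in>{0<..W}. \<forall>y\<in>{0<..W}. x \<le> y \<longrightarrow> y \<le> w \<longrightarrow> f y \<le> f x"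
    "\<forall>x\<in>{0<..W}. \<forall>y\<in>{0<..W}. w \<le> x \<longrightarrow> x \<le> y \<longrightarrow> f x \<le> f y"
    "w = 0 \<Longrightarrow> (f \<longlongrightarrow> Inf (f ` {0<..W})) (at_right 0)"
proof -
  show "0 \<le> w" "w \<le> W" using mn W unfolding is_minimizer_def by auto
  show "w = 0 \<Longrightarrow> (f \<longlongrightarrow> Inf (f ` {0<..W})) (at_right 0)"
    using mn unfolding is_minimizer_def by auto
  show "\<forall>x\<in>{0<..W}. \<forall>y\<in>{0<..W}. x \<le> y \<longrightarrow> y \<le> w \<longrightarrow> f y \<le> f x"
  proof (cases "w = 0")
    case True then show ?thesis by auto
  next
    case False
    then have m: "w \<in> {0<..W}" "\<forall>x\<in>{0<..W}. f w \<le> f x" using mn unfolding is_minimizer_def by auto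
    show ?thesis
    proof (intro ballI impI)
      fix x y assume xy: "x \<in> {0<..W}" "y \<in> {0<..W}" "x \<le> y" "y \<le> w"
      from qc[unfolded quasi_convex_on_def] show "f y \<le> f x"
      proof (elim disjE bexE conjE)
        assume "\<forall>x\<in>{0<..W}. \<forall>y\<in>{0<..W}. x \<le> y \<longrightarrow> f x \<le> f y"
        then have "f y \<le> f w" using xy m by auto
        then show ?thesis using m xy by (meson order.trans)
      next
        assume "\<forall>x\<in>{0<..W}. \<forall>y\<in>{0<..W}. x \<le> y \<longrightarrow> f y \<le> f x"
        then show ?thesis using xy by auto
      next
        fix w0 assume w0: "w0 \<in> {0<..W}"
          "\<forall>x\<in>{0<..W}. \<forall>y\<in>{0<..W}. x \<le> y \<longrightarrow> y \<le> w0 \<longrightarrow> f y \<le> f x"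
          "\<forall>x\<in>{0<..W}. \<forall>y\<in>{0<..W}. w0 \<le> x \<longrightarrow> x \<le> y \<longrightarrow> f x \<le> f y"
        show ?thesis
        proof (cases "y \<le> w0")
          case True then show ?thesis using w0 xy by auto
        next
          case False
          then have "f y \<le> f w" using w0(3) xy m by auto
          then show ?thesis using m xy by (meson order.trans)
        qed
      qed
    qed
  qed
  show "\<forall>x\<in>{0<..W}. \<forall>y\<in>{0<..W}. w \<le> x \<longrightarrow> x \<le> y \<longrightarrow> f x \<le> f y"
  proof (cases "w = 0")
    case False
    then have m: "w \<in> {0<..W}" "\<forall>x\<in>{0<..W}. f w \<le> f x" using mn unfolding is_minimizer_def by auto
    show ?thesis
    proof (intro ballI impI)
      fix x y assume xy: "x \<in> {0<..W}" "y \<in> {0<..W}" "w \<le> x" "x \<le> y"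
      from qc[unfolded quasi_convex_on_def] show "f x \<le> f y"
      proof (elim disjE bexE conjE)
        assume "\<forall>x\<in>{0<..W}. \<forall>y\<in>{0<..W}. x \<le> y \<longrightarrow> f x \<le> f y"
        then show ?thesis using xy by auto
      next
        assume "\<forall>x\<in>{0<..W}. \<forall>y\<in>{0<..W}. x \<le> y \<longrightarrow> f y \<le> f x"
        then have "f x \<le> f w" using xy m by auto
        then show ?thesis using m xy by (meson order.trans)
      next
        fix w0 assume w0: "w0 \<in> {0<..W}"
          "\<forall>x\<in>{0<..W}. \<forall>y\<in>{0<..W}. x \<le> y \<longrightarrow> y \<le> w0 \<longrightarrow> f y \<le> f x"
          "\<forall>x\<in>{0<..W}. \<forall>y\<in>{0<..W}. w0 \<le> x \<longrightarrow> x \<le> y \<longrightarrow> f x \<le> f y"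
        show ?thesis
        proof (cases "w0 \<le> x")
          case True then show ?thesis using w0 xy by auto
        next
          case False
          then have "f x \<le> f w" using w0(2) xy m by auto
          then show ?thesis using m xy by (meson order.trans)
        qed
      qed
    qed
  next
    case True
    then have lim: "(f \<longlongrightarrow> Inf (f ` {0<..W})) (at_right 0)"
      using mn unfolding is_minimizer_def by auto
    define L where "L = Inf (f ` {0<..W})"
    have ne: "f ` {0<..W} \<noteq> {}" using W by auto
    have bddL: "L \<le> f y" if "y \<in> {0<..W}" "bdd_below (f ` {0<..W})" for y
      unfolding L_def using that by (auto intro: cInf_lower)
    have upL: "f x \<le> L" if "x \<in> {0<..W}" "\<forall>t\<in>{0<..W}. t \<le> x \<longrightarrow> f x \<le> f t" for x
    proof -
      have ev: "eventually (\<lambda>t. f x \<le> f t) (at_right 0)"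
        unfolding eventually_at_right_field
        by (rule exI[of _ x]) (use that in auto)
      show ?thesis using tendsto_lowerbound[OF lim ev trivial_limit_at_right_real]
        unfolding L_def .
    qed
    show ?thesis
    proof (intro ballI impI)
      fix x y assume xy: "x \<in> {0<..W}" "y \<in> {0<..W}" "w \<le> x" "x \<le> y"
      from qc[unfolded quasi_convex_on_def] show "f x \<le> f y"
      proof (elim disjE bexE conjE)
        assume "\<forall>x\<in>{0<..W}. \<forall>y\<in>{0<..W}. x \<le> y \<longrightarrow> f x \<le> f y"
        then show ?thesis using xy by auto
      next
        assume dec: "\<forall>x\<in>{0<..W}. \<forall>y\<in>{0<..W}. x \<le> y \<longrightarrow> f y \<le> f x"
        have bdd: "bdd_below (f ` {0<..W})"
          using dec W by (intro bdd_belowI[of _ "f W"]) auto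
        have "f x \<le> L" using upL[OF xy(1)] dec xy by auto
        moreover have "L \<le> f y" using bddL[OF xy(2) bdd] .
        ultimately show ?thesis by auto
      next
        fix w0 assume w0: "w0 \<in> {0<..W}" "\<forall>x\<in>{0<..W}. f w0 \<le> f x"
          "\<forall>x\<in>{0<..W}. \<forall>y\<in>{0<..W}. x \<le> y \<longrightarrow> y \<le> w0 \<longrightarrow> f y \<le> f x"
          "\<forall>x\<in>{0<..W}. \<forall>y\<in>{0<..W}. w0 \<le> x \<longrightarrow> x \<le> y \<longrightarrow> f x \<le> f y"
        show ?thesis
        proof (cases "w0 \<le> x")
          case True then show ?thesis using w0 xy by auto
        next
          case False
          have bdd: "bdd_below (f ` {0<..W})"
            using w0 by (intro bdd_belowI[of _ "f w0"]) auto
          have "f x \<le> L" using upL[OF xy(1)] w0(3) xy False by auto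
          moreover have "L \<le> f y" using bddL[OF xy(2) bdd] .
          ultimately show ?thesis by auto
        qed
      qed
    qed
  qed
qed

theorem theorem2:
  fixes M :: "real measure" and theta_R theta sg P s2nu :: real
    and w_theta w_sigma :: real
  assumes "prob_space M" and "sets M = sets borel"
    and "distr M borel uminus = M"
    and "theta_R > 0" and "0 < theta" and "theta \<le> theta_R"
    and "sg > 0" and "P > 0" and "s2nu \<ge> 0"
    and "quasi_convex_on (2 * pi / theta_R) (AsV_theta M P s2nu sg)"
    and "quasi_convex_on (2 * pi / theta_R) (AsV_sigma M P s2nu sg)"
    and "AsV_theta M P s2nu sg differentiable_on {0<..2 * pi / theta_R}"
    and "AsV_sigma M P s2nu sg differentiable_on {0<..2 * pi / theta_R}"
    and "is_minimizer (2 * pi / theta_R) (AsV_theta M P s2nu sg) w_theta"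
    and "is_minimizer (2 * pi / theta_R) (AsV_sigma M P s2nu sg) w_sigma"
  shows "\<exists>w_gamma. is_minimizer (2 * pi / theta_R) (AsV_gamma M P s2nu theta sg) w_gamma
           \<and> min w_theta w_sigma \<le> w_gamma \<and> w_gamma \<le> max w_theta w_sigma"
proof -
  define W where "W = 2 * pi / theta_R"
  define f where "f = AsV_theta M P s2nu sg"
  define g where "g = AsV_sigma M P s2nu sg"
  define \<gamma> where "\<gamma> = theta^2 / sg^2"
  define a where "a = 4 * \<gamma> / sg^2"
  define b where "b = a * \<gamma>"
  have W: "W > 0" using assms(4) unfolding W_def by simp
  have gpos: "\<gamma> > 0" using assms(5,7) unfolding \<gamma>_def by simp
  have ab: "a > 0" "b > 0" using gpos assms(7) unfolding a_def b_def by auto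
  have hg: "AsV_gamma M P s2nu theta sg = (\<lambda>x. a * f x + b * g x)"
    unfolding AsV_gamma_def a_def b_def \<gamma>_def f_def g_def
    by (simp add: Let_def algebra_simps fun_eq_iff)
  have cf: "continuous_on {0<..W} f" using assms(12) differentiable_imp_continuous_on
    unfolding f_def W_def by blast
  have cg: "continuous_on {0<..W} g" using assms(13) differentiable_imp_continuous_on
    unfolding g_def W_def by blast
  note Bf = lemB[OF W assms(10)[folded W_def f_def] assms(14)[folded W_def f_def]]
  note Bg = lemB[OF W assms(11)[folded W_def g_def] assms(15)[folded W_def g_def]]
  show ?thesis
  proof (cases "w_theta \<le> w_sigma")
    case True
    obtain w where "is_minimizer W (\<lambda>x. a * f x + b * g x) w" "w_theta \<le> w" "w \<le> w_sigma"
      using lemA[OF W ab cf cg Bf(1) True Bg(2) Bf(3) Bf(4) Bg(3) Bg(4) Bf(5) Bg(5)] by blast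
    then show ?thesis using True unfolding hg W_def by (intro exI[of _ w]) auto
  next
    case False
    then have F: "w_sigma \<le> w_theta" by auto
    obtain w where "is_minimizer W (\<lambda>x. b * g x + a * f x) w" "w_sigma \<le> w" "w \<le> w_theta"
      using lemA[OF W ab(2,1) cg cf Bg(1) F Bf(2) Bg(3) Bg(4) Bf(3) Bf(4) Bg(5) Bf(5)] by blast
    then show ?thesis using F unfolding hg W_def by (intro exI[of _ w]) (auto simp: add.commute)
  qed
qed

end
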